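(* Let $q$ be a prime power with $q\equiv 1\pmod 4$ and $5\mid(q-1)$, and let $n=1+\frac{q-1}{5}$. Then $C_5+C_n:=\{\alpha+\beta:\alpha\in C_5,\beta\in C_n\}\neq\mathbb{F}_q$. In fact, $|C_5+C_n|\le q-1$.
   Context: For a prime power $q$ and an integer $k>1$, an element $a\in\mathbb{F}_q$ is called a $k$-potent if $a^k=a$, and $C_k$ denotes the set of all $k$-potents in $\mathbb{F}_q$. *)

theory Defs
  imports Main
begin

definition kpotents :: "nat \<Rightarrow> 'a::field set" where
  "kpotents k = {a. a ^ k = a}"

definition sumset :: "'a::plus set \<Rightarrow> 'a set \<Rightarrow> 'a set" where
  "sumset A B = {x + y | x y. x \<in> A \<and> y \<in> B}"

end

theory Submission
  imports Defs "HOL-Computational_Algebra.Polynomial"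
begin

lemma kpot_card:
  assumes "k \<ge> 2"
  shows "card (kpotents k :: 'a::field set) \<le> k"
proof -
  define p :: "'a poly" where "p = monom 1 k + [:0,-1:]"
  have dp: "degree p = k" unfolding p_def using assms
    by (subst degree_add_eq_left) (auto simp: degree_monom_eq)
  hence "p \<noteq> 0" using assms by auto
  have "kpotents k = {x. poly p x = 0}"
    by (auto simp: kpotents_def p_def poly_monom)
  thus ?thesis using card_poly_roots_bound[OF \<open>p \<noteq> 0\<close>] dp by simp
qed

lemma kpot_finite: "finite (kpotents k :: 'a::{field,finite} set)"
  by simp

theorem mainTheorem4:
  fixes q n :: nat
  assumes "card (UNIV :: ('a::{field,finite}) set) = q"
    and "q mod 4 = 1"
    and "5 dvd (q - 1)"
    and "n = 1 + (q - 1) div 5"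
  shows "sumset (kpotents 5 :: 'a set) (kpotents n) \<noteq> UNIV
         \<and> card (sumset (kpotents 5 :: 'a set) (kpotents n)) \<le> q - 1"
proof -
  have q2: "q \<ge> 2"
  proof -
    have "{0::'a, 1} \<subseteq> UNIV" by simp
    hence "card {0::'a,1} \<le> card (UNIV::'a set)" by (intro card_mono) auto
    thus ?thesis using assms(1) by simp
  qed
  obtain m where qm: "q = 20 * m + 1" and m1: "m \<ge> 1"
  proof -
    have "20 dvd (q - 1)" using assms(2,3) q2 by presburger
    then obtain m where "q - 1 = 20 * m" by auto
    moreover have "m \<ge> 1" using q2 \<open>q - 1 = 20 * m\<close> by simp
    moreover have "q = 20 * m + 1" using q2 \<open>q - 1 = 20 * m\<close> by linarith
    ultimately show ?thesis using that by blast
  qed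
  have nm: "n = 4 * m + 1" using assms(4) qm by simp
  define Cn where "Cn = (kpotents n :: 'a set)"
  define C5 where "C5 = (kpotents 5 :: 'a set) - {0}"
  have cCn: "card Cn \<le> n" unfolding Cn_def using kpot_card[of n] nm m1 by simp
  have c5: "card C5 \<le> 4"
  proof -
    have "(0::'a) \<in> kpotents 5" by (simp add: kpotents_def)
    thus ?thesis unfolding C5_def using kpot_card[of 5, where 'a='a]
      by (simp add: card_Diff_singleton)
  qed
  have inCn: "a \<in> Cn" "- a \<in> Cn" if "a \<in> C5" for a
  proof -
    have a5: "a ^ 5 = a" "a \<noteq> 0" using that by (auto simp: C5_def kpotents_def)
    have a4: "a ^ 4 = 1"
    proof -
      have "a * a ^ 4 = a * 1" using a5(1) by (simp add: power_Suc[symmetric])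
      thus ?thesis using a5(2) by simp
    qed
    have "a ^ n = a * (a ^ 4) ^ m" by (simp add: nm power_mult power_Suc)
    thus "a \<in> Cn" using a4 by (simp add: Cn_def kpotents_def)
    have "(-a) ^ 4 = 1" using a4 by (simp add: power_minus_even)
    moreover have "(-a) ^ n = (-a) * ((-a) ^ 4) ^ m" by (simp add: nm power_mult power_Suc)
    ultimately show "- a \<in> Cn" by (simp add: Cn_def kpotents_def)
  qed
  have z: "(0::'a) \<in> Cn" using nm by (simp add: Cn_def kpotents_def)
  have sub: "sumset (kpotents 5 :: 'a set) (kpotents n) \<subseteq>
      Cn \<union> (\<Union>a\<in>C5. (\<lambda>x. a + x) ` (Cn - {0, -a}))"
  proof
    fix s assume "s \<in> sumset (kpotents 5 :: 'a set) (kpotents n)"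
    then obtain a b where ab: "s = a + b" "a \<in> kpotents 5" "b \<in> Cn"
      by (auto simp: sumset_def Cn_def)
    show "s \<in> Cn \<union> (\<Union>a\<in>C5. (\<lambda>x. a + x) ` (Cn - {0, -a}))"
    proof (cases "a = 0")
      case True thus ?thesis using ab by simp
    next
      case False
      hence aC: "a \<in> C5" using ab by (simp add: C5_def)
      show ?thesis
      proof (cases "b = 0 \<or> b = -a")
        case True thus ?thesis using ab inCn[OF aC] z by auto
      next
        case False thus ?thesis using ab aC by blast
      qed
    qed
  qed
  have "card (sumset (kpotents 5 :: 'a set) (kpotents n)) \<le>
      card (Cn \<union> (\<Union>a\<in>C5. (\<lambda>x. a + x) ` (Cn - {0, -a})))"
    by (intro card_mono sub) simp
  also have "\<dots> \<le> card Cn + card (\<Union>a\<in>C5. (\<lambda>x. a + x) ` (Cn - {0, -a}))"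
    by (rule card_Un_le)
  also have "card (\<Union>a\<in>C5. (\<lambda>x. a + x) ` (Cn - {0, -a})) \<le>
      (\<Sum>a\<in>C5. card ((\<lambda>x. a + x) ` (Cn - {0, -a})))"
    by (intro card_UN_le) simp
  also have "\<dots> \<le> (\<Sum>a\<in>C5. n - 2)"
  proof (intro sum_mono)
    fix a assume "a \<in> C5"
    hence "a \<noteq> 0" "-a \<in> Cn" using inCn by (auto simp: C5_def)
    hence "card (Cn - {0, -a}) = card Cn - 2" using z
      by (subst card_Diff_subset) auto
    thus "card ((\<lambda>x. a + x) ` (Cn - {0, -a})) \<le> n - 2"
      using card_image_le[of "Cn - {0, -a}" "\<lambda>x. a + x"] cCn by simp
  qed
  also have "\<dots> = card C5 * (n - 2)" by simp
  also have "\<dots> \<le> 4 * (n - 2)" using c5 by simp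
  finally have "card (sumset (kpotents 5 :: 'a set) (kpotents n)) \<le> n + 4 * (n - 2)"
    using cCn by linarith
  hence cS: "card (sumset (kpotents 5 :: 'a set) (kpotents n)) \<le> q - 1"
    using nm qm m1 by simp
  moreover have "sumset (kpotents 5 :: 'a set) (kpotents n) \<noteq> UNIV"
    using cS assms(1) q2 by auto
  ultimately show ?thesis by simp
qed

end
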